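(* Let $L$ be a positive definite lattice with $\operatorname{rank} L\geq 4$ and let $\mathcal{A}_{a,m}$ be an admissible arithmetic progression. If $\mathcal{A}_{a,m}\subseteq \mathcal{E}(L)$, then there is a prime $p\mid m$ such that $a\in\mathcal{E}(L_p)$, i.e. $a\notin Q(L_p)$.
   Context: A lattice is a finitely generated $\mathbb{Z}$-submodule $L$ of a finite-dimensional quadratic space $(V,Q)$ over $\mathbb{Q}$, with associated symmetric bilinear form $B$ satisfying $Q(v)=B(v,v)$; it is assumed throughout that the scale of $L$ (the fractional ideal generated by $\{B(x,y):x,y\in L\}$) equals $\mathbb{Z}$. $L$ is positive definite if $Q(v)>0$ for all nonzero $v\in L$. $\mathbb{N}$ is the set of positive integers, $Q(L)=\{Q(v):v\in L\}$ and $\mathcal{E}(L)=\mathbb{N}\setminus Q(L)$. For a prime $p$, $L_p=\mathbb{Z}_p\otimes L$, $Q(L_p)=\{Q(v):v\in L_p\}$ and $\mathcal{E}(L_p)=\mathbb{Z}_p\setminus Q(L_p)$. For positive integers $a<m$, $\mathcal{A}_{a,m}=\{a+mx : x\in\mathbb{N}\cup\{0\}\}$, and $\mathcal{A}_{a,m}$ is admissible if $\operatorname{ord}_p a<\operatorname{ord}_p m$ for every prime $p\mid m$. *)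

theory Defs
  imports "HOL-Computational_Algebra.Computational_Algebra"
begin

text \<open>A lattice L of rank n is given by its Gram matrix G (entries B(e_i,e_j)) with
  respect to a Z-basis e_0,...,e_(n-1); vectors of L are coordinate vectors x :: nat => int
  (only coordinates i < n matter).  Since the scale is assumed to be Z, all B-values are
  integers, so G is integral.\<close>

definition Bf :: "(nat \<Rightarrow> nat \<Rightarrow> 'a::comm_ring_1) \<Rightarrow> nat \<Rightarrow> (nat \<Rightarrow> 'a) \<Rightarrow> (nat \<Rightarrow> 'a) \<Rightarrow> 'a" where
  "Bf G n x y = (\<Sum>i<n. \<Sum>j<n. x i * G i j * y j)"

definition Qf :: "(nat \<Rightarrow> nat \<Rightarrow> 'a::comm_ring_1) \<Rightarrow> nat \<Rightarrow> (nat \<Rightarrow> 'a) \<Rightarrow> 'a" where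
  "Qf G n x = Bf G n x x"

definition symmetric_gram :: "(nat \<Rightarrow> nat \<Rightarrow> int) \<Rightarrow> nat \<Rightarrow> bool" where
  "symmetric_gram G n \<longleftrightarrow> (\<forall>i<n. \<forall>j<n. G i j = G j i)"

definition pos_def_lattice :: "(nat \<Rightarrow> nat \<Rightarrow> int) \<Rightarrow> nat \<Rightarrow> bool" where
  "pos_def_lattice G n \<longleftrightarrow> (\<forall>x::nat \<Rightarrow> int. (\<exists>i<n. x i \<noteq> 0) \<longrightarrow> Qf G n x > 0)"

definition lattice_scale :: "(nat \<Rightarrow> nat \<Rightarrow> int) \<Rightarrow> nat \<Rightarrow> int set" where
  "lattice_scale G n = {s. \<exists>k (c::nat \<Rightarrow> int) (x::nat \<Rightarrow> nat \<Rightarrow> int) y.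
      s = (\<Sum>t<k. c t * Bf G n (x t) (y t))}"

definition QL :: "(nat \<Rightarrow> nat \<Rightarrow> int) \<Rightarrow> nat \<Rightarrow> int set" where
  "QL G n = {Qf G n x | x. True}"

definition EL :: "(nat \<Rightarrow> nat \<Rightarrow> int) \<Rightarrow> nat \<Rightarrow> nat set" where
  "EL G n = {N. N > 0 \<and> int N \<notin> QL G n}"

text \<open>p-adic integers Z_p as the inverse limit of Z/p^k Z: coherent sequences of residues.
  Ring operations are componentwise modulo p^k; the integer a embeds as (a mod p^k)_k.\<close>
definition Zp :: "nat \<Rightarrow> (nat \<Rightarrow> int) set" where
  "Zp p = {f. \<forall>k. 0 \<le> f k \<and> f k < int p ^ k \<and> f (Suc k) mod int p ^ k = f k}"

text \<open>a \<in> Q(L_p): there is v \<in> (Z_p)^n (coordinates of a vector of L_p = Z_p \<otimes> L) with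
  Q(v) = a in Z_p, i.e. equality at every level p^k.\<close>
definition in_QLp :: "(nat \<Rightarrow> nat \<Rightarrow> int) \<Rightarrow> nat \<Rightarrow> nat \<Rightarrow> int \<Rightarrow> bool" where
  "in_QLp G n p a \<longleftrightarrow> (\<exists>v::nat \<Rightarrow> nat \<Rightarrow> int. (\<forall>i<n. v i \<in> Zp p) \<and>
      (\<forall>k. Qf G n (\<lambda>i. v i k) mod int p ^ k = a mod int p ^ k))"

definition AP :: "nat \<Rightarrow> nat \<Rightarrow> nat set" where
  "AP a m = {a + m * x | x. True}"

definition admissible :: "nat \<Rightarrow> nat \<Rightarrow> bool" where
  "admissible a m \<longleftrightarrow> 0 < a \<and> a < m \<and>
     (\<forall>p. prime p \<longrightarrow> p dvd m \<longrightarrow> multiplicity p a < multiplicity p m)"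

end

theory Submission
  imports Defs "HOL-Number_Theory.Number_Theory"
begin

lemma Qf_cong:
  fixes G :: "nat \<Rightarrow> nat \<Rightarrow> int"
  assumes "\<And>i. i < n \<Longrightarrow> [v i = w i] (mod d)"
  shows "[Qf G n v = Qf G n w] (mod d)"
  unfolding Qf_def Bf_def
  by (intro cong_sum cong_mult assms cong_refl) auto

lemma Qf_crt:
  fixes G :: "nat \<Rightarrow> nat \<Rightarrow> int" and d1 d2 :: int
  assumes cop: "coprime d1 d2"
    and h1: "[Qf G n v1 = a] (mod d1)" and h2: "[Qf G n v2 = a] (mod d2)"
  shows "\<exists>v. [Qf G n v = a] (mod d1 * d2)"
proof -
  have "\<forall>i. \<exists>x. [x = v1 i] (mod d1) \<and> [x = v2 i] (mod d2)"
    using binary_chinese_remainder_int[OF cop] by blast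
  then obtain v where v: "\<And>i. [v i = v1 i] (mod d1) \<and> [v i = v2 i] (mod d2)"
    by metis
  have "[Qf G n v = Qf G n v1] (mod d1)" by (rule Qf_cong) (use v in blast)
  with h1 have a1: "[Qf G n v = a] (mod d1)" using cong_trans by blast
  have "[Qf G n v = Qf G n v2] (mod d2)" by (rule Qf_cong) (use v in blast)
  with h2 have a2: "[Qf G n v = a] (mod d2)" using cong_trans by blast
  have "[Qf G n v = a] (mod d1 * d2)"
    using a1 a2 cop by (simp add: cong_iff_dvd_diff divides_mult)
  then show ?thesis by blast
qed

lemma local_to_mod:
  fixes G :: "nat \<Rightarrow> nat \<Rightarrow> int" and m :: nat and a :: int
  assumes loc: "\<forall>p. prime p \<longrightarrow> p dvd m \<longrightarrow> in_QLp G n p a"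
  shows "d dvd m \<Longrightarrow> d > 0 \<Longrightarrow> \<exists>v. [Qf G n v = a] (mod int d)"
proof (induction d rule: less_induct)
  case (less d)
  show ?case
  proof (cases "d = 1")
    case True
    then show ?thesis by simp
  next
    case False
    then obtain p where p: "prime p" "p dvd d" using prime_factor_nat by blast
    define k where "k = multiplicity p d"
    define d' where "d' = d div p ^ k"
    have pk: "p ^ k dvd d" unfolding k_def by (rule multiplicity_dvd)
    have dd: "d = p ^ k * d'" unfolding d'_def using pk by simp
    have ndvd: "\<not> p dvd d'" unfolding d'_def k_def by (rule multiplicity_decompose) (use less.prems p not_prime_unit in auto)
    have k1: "k \<ge> 1" unfolding k_def using p less.prems
      by (auto simp add: prime_multiplicity_gt_zero_iff Suc_le_eq)
    have "p ^ k > 1" using k1 p using one_less_power[OF prime_gt_1_nat[OF p(1)], of k] by simp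
    then have d'lt: "d' < d" using dd less.prems by simp
    have d'pos: "d' > 0" using dd less.prems by simp
    have d'dvd: "d' dvd m" using dd less.prems(1) by (metis dvd_mult_right)
    obtain v2 where v2: "[Qf G n v2 = a] (mod int d')" using less.IH[OF d'lt d'dvd d'pos] by blast
    have "p dvd m" using p less.prems dvd_trans by blast
    then have "in_QLp G n p a" using loc p by blast
    then obtain w where w: "\<And>kk. Qf G n (\<lambda>i. w i kk) mod int p ^ kk = a mod int p ^ kk"
      unfolding in_QLp_def by blast
    have v1: "[Qf G n (\<lambda>i. w i k) = a] (mod int (p ^ k))"
      using w[of k] by (simp add: cong_def)
    have "coprime (p ^ k) d'" using ndvd p
      by (simp add: prime_imp_coprime)
    then have cop: "coprime (int (p ^ k)) (int d')" by simp
    from Qf_crt[OF cop v1 v2] show ?thesis using dd by simp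
  qed
qed

theorem lemma2:
  fixes G :: "nat \<Rightarrow> nat \<Rightarrow> int" and n a m :: nat
  assumes "symmetric_gram G n"
    and "pos_def_lattice G n"
    and "lattice_scale G n = UNIV"
    and "n \<ge> 4"
    and "admissible a m"
    and "AP a m \<subseteq> EL G n"
  shows "\<exists>p. prime p \<and> p dvd m \<and> \<not> in_QLp G n p (int a)"
proof (rule ccontr)
  assume "\<not> ?thesis"
  then have loc: "\<forall>p. prime p \<longrightarrow> p dvd m \<longrightarrow> in_QLp G n p (int a)" by blast
  have am: "0 < a" "a < m" using assms(5) unfolding admissible_def by auto
  obtain v where v: "[Qf G n v = int a] (mod int m)"
    using local_to_mod[OF loc, of m] am by auto
  define q where "q = Qf G n v"
  have qmod: "q mod int m = int a" using v am unfolding q_def cong_def by simp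
  have "q \<noteq> 0" using qmod am by auto
  have q0: "q > 0"
  proof (cases "\<exists>i<n. v i \<noteq> 0")
    case True
    then show ?thesis using assms(2) unfolding pos_def_lattice_def q_def by blast
  next
    case False
    then have "q = 0" unfolding q_def Qf_def Bf_def by simp
    with \<open>q \<noteq> 0\<close> show ?thesis by simp
  qed
  have qa: "q \<ge> int a" using qmod q0 am
    using zmod_le_nonneg_dividend[of q "int m"] by simp
  define x where "x = nat (q div int m)"
  have "q = int a + int m * (q div int m)"
    using qmod div_mod_decomp_int[of q "int m"] by (simp add: algebra_simps)
  moreover have "q div int m \<ge> 0" using q0 am by (simp add: pos_imp_zdiv_nonneg_iff)
  ultimately have qx: "q = int (a + m * x)" unfolding x_def by simp
  have "a + m * x \<in> AP a m" unfolding AP_def by blast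
  then have "a + m * x \<in> EL G n" using assms(6) by blast
  then have "int (a + m * x) \<notin> QL G n" unfolding EL_def by blast
  moreover have "q \<in> QL G n" unfolding QL_def q_def by blast
  ultimately show False using qx by simp
qed

end
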